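(* Let $q\in(0,1)$ and let $W\in[0,1]^{I\times I}$ be symmetric ($W=W^*$). Consider the Probabilistic Broadcast Gossip Algorithm: at each time $t$, a node $j$ is drawn uniformly at random from $I$; each node $i\ne j$ independently receives $x_j(t)$ with probability $W_{ij}$, and then sets $x_i(t+1)=x_i(t)+q(x_j(t)-x_i(t))$; all other nodes keep $x_k(t+1)=x_k(t)$. The random choices at different times are independent. Writing this as $x(t+1)=x(t)-L(t)x(t)$, one has $\mathbf{1}^*\mathbb{E}[L(t)]=0$ and $$\mathbb{E}[L(t)^*\mathbf{1}\mathbf{1}^*L(t)]\le\gamma\,\mathbb{E}[L(t)+L(t)^*-L(t)^*L(t)]\quad\text{with }\gamma=(W_{\max}+1)\frac{q}{1-q},$$ where $W_{\max}=\max_{i\in I}\sum_{j\in I}W_{ij}$; consequently $\mathbb{E}[(\bar x(t)-\bar x(0))^2]\le\frac{\gamma}{N+\gamma}V(x(0))$ for all $t\ge0$.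
   Context: $I$ is a finite set of $N$ nodes, $x(0)\in\mathbb{R}^I$ deterministic. For the update above, $L(t)$ is the Laplacian of the random weight matrix $a_{ij}(t)$ (where $a_{ij}(t)=q$ if $j$ is the broadcasting node and $i\neq j$ received, and $0$ otherwise for $i\ne j$): $L_{ij}(t)=-a_{ij}(t)$ for $i\ne j$, $L_{ii}(t)=\sum_{j\ne i}a_{ij}(t)$. $\mathbf{1}$ is the all-ones vector, $M^*$ the transpose; $\bar y=\frac1N\sum_i y_i$, $V(y)=\frac1N\sum_i(y_i-\bar y)^2$. For square matrices, $A\le B$ means $A-B$ is negative semidefinite. *)

theory Defs
  imports "HOL-Probability.Probability"
begin

text \<open>Nodes: the finite type 'i (so N = CARD('i)). Matrices on I are functions 'i => 'i => real.
One round of the algorithm is an outcome (j, r): j the broadcasting node, r i = True iff node i received.\<close>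

type_synonym 'i outcome = "'i \<times> ('i \<Rightarrow> bool)"

definition outcome_pmf :: "('i::finite \<Rightarrow> 'i \<Rightarrow> real) \<Rightarrow> 'i outcome pmf" where
  "outcome_pmf W = do {
      j \<leftarrow> pmf_of_set (UNIV :: 'i set);
      r \<leftarrow> Pi_pmf (UNIV - {j}) False (\<lambda>i. bernoulli_pmf (W i j));
      return_pmf (j, r) }"

definition pbga_step :: "real \<Rightarrow> 'i outcome \<Rightarrow> ('i \<Rightarrow> real) \<Rightarrow> ('i \<Rightarrow> real)" where
  "pbga_step q \<omega> x = (\<lambda>i. if i \<noteq> fst \<omega> \<and> snd \<omega> i then x i + q * (x (fst \<omega>) - x i) else x i)"

fun pbga_state :: "('i::finite \<Rightarrow> 'i \<Rightarrow> real) \<Rightarrow> real \<Rightarrow> ('i \<Rightarrow> real) \<Rightarrow> nat \<Rightarrow> ('i \<Rightarrow> real) pmf" where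
  "pbga_state W q x0 0 = return_pmf x0"
| "pbga_state W q x0 (Suc t) =
     pbga_state W q x0 t \<bind> (\<lambda>x. map_pmf (\<lambda>\<omega>. pbga_step q \<omega> x) (outcome_pmf W))"

definition pbga_weight :: "real \<Rightarrow> 'i outcome \<Rightarrow> 'i \<Rightarrow> 'i \<Rightarrow> real" where
  "pbga_weight q \<omega> i k = (if k = fst \<omega> \<and> i \<noteq> k \<and> snd \<omega> i then q else 0)"

definition laplacian :: "('i::finite \<Rightarrow> 'i \<Rightarrow> real) \<Rightarrow> 'i \<Rightarrow> 'i \<Rightarrow> real" where
  "laplacian a i k = (if i = k then (\<Sum>l\<in>UNIV - {i}. a i l) else - a i k)"

definition pbga_L :: "real \<Rightarrow> 'i::finite outcome \<Rightarrow> 'i \<Rightarrow> 'i \<Rightarrow> real" where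
  "pbga_L q \<omega> = laplacian (pbga_weight q \<omega>)"

definition mmult :: "('i::finite \<Rightarrow> 'i \<Rightarrow> real) \<Rightarrow> ('i \<Rightarrow> 'i \<Rightarrow> real) \<Rightarrow> 'i \<Rightarrow> 'i \<Rightarrow> real" where
  "mmult A B = (\<lambda>i k. \<Sum>l\<in>UNIV. A i l * B l k)"

definition mtrans :: "('i \<Rightarrow> 'i \<Rightarrow> real) \<Rightarrow> 'i \<Rightarrow> 'i \<Rightarrow> real" where
  "mtrans A = (\<lambda>i k. A k i)"

definition ones_mat :: "'i \<Rightarrow> 'i \<Rightarrow> real" where
  "ones_mat = (\<lambda>i k. 1)"

definition mat_le :: "('i::finite \<Rightarrow> 'i \<Rightarrow> real) \<Rightarrow> ('i \<Rightarrow> 'i \<Rightarrow> real) \<Rightarrow> bool" where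
  "mat_le A B \<longleftrightarrow> (\<forall>v. (\<Sum>i\<in>UNIV. \<Sum>k\<in>UNIV. v i * (A i k - B i k) * v k) \<le> 0)"

definition mexp :: "'w pmf \<Rightarrow> ('w \<Rightarrow> 'i \<Rightarrow> 'i \<Rightarrow> real) \<Rightarrow> 'i \<Rightarrow> 'i \<Rightarrow> real" where
  "mexp p M = (\<lambda>i k. measure_pmf.expectation p (\<lambda>\<omega>. M \<omega> i k))"

definition avg :: "('i::finite \<Rightarrow> real) \<Rightarrow> real" where
  "avg y = (\<Sum>i\<in>UNIV. y i) / real CARD('i)"

definition Var :: "('i::finite \<Rightarrow> real) \<Rightarrow> real" where
  "Var y = (\<Sum>i\<in>UNIV. (y i - avg y)^2) / real CARD('i)"

end

theory Submission
  imports Defs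
begin


lemma fin_pmf[simp]: "finite (set_pmf (p :: ('a::finite) pmf))"
  by (rule finite_subset[of _ UNIV]) auto

lemma int_fin[simp]: "integrable (measure_pmf (p::'a::finite pmf)) (f::'a \<Rightarrow> real)"
  by (rule integrable_measure_pmf_finite) simp

definition Pj :: "('i::finite \<Rightarrow> 'i \<Rightarrow> real) \<Rightarrow> 'i \<Rightarrow> ('i \<Rightarrow> bool) pmf" where
  "Pj W j = Pi_pmf (UNIV - {j}) False (\<lambda>i. bernoulli_pmf (W i j))"

lemma E_outcome:
  fixes f :: "'i::finite outcome \<Rightarrow> real"
  shows "measure_pmf.expectation (outcome_pmf W) f =
     (\<Sum>j\<in>UNIV. measure_pmf.expectation (Pj W j) (\<lambda>r. f (j,r))) / real CARD('i)"
  unfolding outcome_pmf_def Pj_def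
  apply (subst pmf_expectation_bind_pmf_of_set)
     apply (auto simp: map_pmf_def[symmetric] sum_divide_distrib)
  apply (simp add: divide_inverse mult.commute)
  done

lemma ex1:
  assumes "i \<noteq> j" "0 \<le> W i j" "W i j \<le> 1"
  shows "measure_pmf.expectation (Pj W j) (\<lambda>r. if r i then c else 0) = W i j * c"
proof -
  have "map_pmf (\<lambda>r. r i) (Pj W j) = bernoulli_pmf (W i j)"
    unfolding Pj_def by (subst Pi_pmf_component) (use assms in auto)
  hence "measure_pmf.expectation (Pj W j) (\<lambda>r. if r i then c else 0)
     = measure_pmf.expectation (bernoulli_pmf (W i j)) (\<lambda>b. if b then c else 0)"
    using integral_map_pmf[of "\<lambda>r. r i" "Pj W j" "\<lambda>b. if b then c else 0"] by simp
  also have "\<dots> = W i j * c"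
    using assms by (subst integral_measure_pmf_real[where A=UNIV]) (auto simp: UNIV_bool)
  finally show ?thesis .
qed

lemma ex2:
  assumes "i \<noteq> j" "k \<noteq> j" "i \<noteq> k" "\<And>i. 0 \<le> W i j \<and> W i j \<le> 1"
  shows "measure_pmf.expectation (Pj W j) (\<lambda>r. if r i \<and> r k then c else 0) = W i j * W k j * c"
proof -
  define f where "f x b = (if x = i \<or> x = k then (if b then 1 else 0) else (1::real))" for x b
  have prod: "(\<Prod>x\<in>UNIV-{j}. f x (r x)) = (if r i \<and> r k then 1 else 0)" for r
  proof -
    have "(\<Prod>x\<in>UNIV-{j}. f x (r x)) = (\<Prod>x\<in>{i,k}. f x (r x)) * (\<Prod>x\<in>UNIV-{j}-{i,k}. f x (r x))"
      using assms by (subst prod.subset_diff[of "{i,k}"]) auto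
    also have "(\<Prod>x\<in>UNIV-{j}-{i,k}. f x (r x)) = 1" by (rule prod.neutral) (auto simp: f_def)
    finally show ?thesis using assms by (auto simp: f_def)
  qed
  have ef: "measure_pmf.expectation (bernoulli_pmf (W x j)) (f x) = (if x = i \<or> x = k then W x j else 1)" for x
    using assms(4)[of x] by (subst integral_measure_pmf_real[where A=UNIV]) (auto simp: UNIV_bool f_def)
  have "measure_pmf.expectation (Pj W j) (\<lambda>r. \<Prod>x\<in>UNIV-{j}. f x (r x)) =
         (\<Prod>x\<in>UNIV-{j}. measure_pmf.expectation (bernoulli_pmf (W x j)) (f x))"
    unfolding Pj_def by (rule expectation_prod_Pi_pmf) (auto simp: f_def)
  also have "\<dots> = (\<Prod>x\<in>{i,k}. measure_pmf.expectation (bernoulli_pmf (W x j)) (f x)) *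
       (\<Prod>x\<in>UNIV-{j}-{i,k}. measure_pmf.expectation (bernoulli_pmf (W x j)) (f x))"
      using assms by (subst prod.subset_diff[of "{i,k}"]) auto
  also have "(\<Prod>x\<in>UNIV-{j}-{i,k}. measure_pmf.expectation (bernoulli_pmf (W x j)) (f x)) = 1"
    by (rule prod.neutral) (auto simp: ef)
  finally have "measure_pmf.expectation (Pj W j) (\<lambda>r. if r i \<and> r k then 1 else 0) = W i j * W k j"
    using assms by (simp add: prod ef)
  hence "c * measure_pmf.expectation (Pj W j) (\<lambda>r. if r i \<and> r k then 1 else 0) = W i j * W k j * c" by simp
  moreover have "(\<lambda>r. if r i \<and> r k then c else 0) = (\<lambda>r. c * (if r i \<and> r k then 1 else 0))" by auto
  ultimately show ?thesis by simp
qed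


lemma E1P:
  assumes "\<And>i. 0 \<le> W i j \<and> W i j \<le> 1"
  shows "measure_pmf.expectation (Pj W j) (\<lambda>r. \<Sum>i\<in>UNIV. if i \<noteq> j \<and> r i then g i else 0)
     = (\<Sum>i\<in>UNIV. if i \<noteq> j then W i j * g i else 0)"
proof -
  have "measure_pmf.expectation (Pj W j) (\<lambda>r. \<Sum>i\<in>UNIV. if i \<noteq> j \<and> r i then g i else 0)
     = (\<Sum>i\<in>UNIV. measure_pmf.expectation (Pj W j) (\<lambda>r. if i \<noteq> j \<and> r i then g i else 0))"
    by (rule Bochner_Integration.integral_sum) simp
  also have "\<dots> = (\<Sum>i\<in>UNIV. if i \<noteq> j then W i j * g i else 0)"
  proof (rule sum.cong)
    fix i show "measure_pmf.expectation (Pj W j) (\<lambda>r. if i \<noteq> j \<and> r i then g i else 0) = (if i \<noteq> j then W i j * g i else 0)"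
      using ex1[of i j W "g i"] assms[of i] by auto
  qed simp
  finally show ?thesis .
qed

lemma E2P:
  assumes "\<And>i. 0 \<le> W i j \<and> W i j \<le> 1"
  shows "measure_pmf.expectation (Pj W j) (\<lambda>r. (\<Sum>i\<in>UNIV. if i \<noteq> j \<and> r i then d i else 0)^2)
     \<le> (\<Sum>i\<in>UNIV. if i \<noteq> j then W i j * d i else 0)^2 + (\<Sum>i\<in>UNIV. if i \<noteq> j then W i j * (d i)^2 else 0)"
proof -
  have sq: "(\<Sum>i\<in>UNIV. if i \<noteq> j \<and> r i then d i else 0)^2 =
     (\<Sum>i\<in>UNIV. \<Sum>k\<in>UNIV. if i \<noteq> j \<and> k \<noteq> j \<and> r i \<and> r k then d i * d k else 0)" for r :: "'a \<Rightarrow> bool"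
    unfolding power2_eq_square sum_product by (intro sum.cong refl) auto
  have "measure_pmf.expectation (Pj W j) (\<lambda>r. (\<Sum>i\<in>UNIV. if i \<noteq> j \<and> r i then d i else 0)^2)
    = (\<Sum>i\<in>UNIV. \<Sum>k\<in>UNIV. measure_pmf.expectation (Pj W j) (\<lambda>r. if i \<noteq> j \<and> k \<noteq> j \<and> r i \<and> r k then d i * d k else 0))"
    unfolding sq
    by (subst Bochner_Integration.integral_sum, simp, rule sum.cong, simp,
        subst Bochner_Integration.integral_sum, simp_all)
  also have "\<dots> = (\<Sum>i\<in>UNIV. \<Sum>k\<in>UNIV. if i \<noteq> j \<and> k \<noteq> j then (if i = k then W i j * (d i * d k) else W i j * W k j * (d i * d k)) else 0)"
  proof (intro sum.cong refl)
    fix i k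
    show "measure_pmf.expectation (Pj W j) (\<lambda>r. if i \<noteq> j \<and> k \<noteq> j \<and> r i \<and> r k then d i * d k else 0)
      = (if i \<noteq> j \<and> k \<noteq> j then (if i = k then W i j * (d i * d k) else W i j * W k j * (d i * d k)) else 0)"
    proof (cases "i \<noteq> j \<and> k \<noteq> j")
      case True
      then show ?thesis
      proof (cases "i = k")
        case True
        then show ?thesis using \<open>i \<noteq> j \<and> k \<noteq> j\<close> ex1[of i j W "d i * d k"] assms by simp
      next
        case False
        then show ?thesis using \<open>i \<noteq> j \<and> k \<noteq> j\<close> ex2[of i j k W "d i * d k"] assms by simp
      qed
    next
      case False
      then have "(\<lambda>r. if i \<noteq> j \<and> k \<noteq> j \<and> r i \<and> r k then d i * d k else 0) = (\<lambda>r. 0)" by auto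
      then show ?thesis using False by (simp del: de_Morgan_conj)
    qed
  qed
  also have "\<dots> \<le> (\<Sum>i\<in>UNIV. \<Sum>k\<in>UNIV. (if i \<noteq> j \<and> k \<noteq> j then W i j * W k j * (d i * d k) else 0)
       + (if i = k \<and> i \<noteq> j then W i j * (d i)^2 else 0))"
  proof (intro sum_mono)
    fix i k
    have "0 \<le> W i j * W i j * (d i * d i)" using assms[of i] by simp
    thus "(if i \<noteq> j \<and> k \<noteq> j then (if i = k then W i j * (d i * d k) else W i j * W k j * (d i * d k)) else 0)
      \<le> (if i \<noteq> j \<and> k \<noteq> j then W i j * W k j * (d i * d k) else 0)
       + (if i = k \<and> i \<noteq> j then W i j * (d i)^2 else 0)"
      by (auto simp: power2_eq_square)
  qed
  also have "\<dots> = (\<Sum>i\<in>UNIV. if i \<noteq> j then W i j * d i else 0)^2 + (\<Sum>i\<in>UNIV. if i \<noteq> j then W i j * (d i)^2 else 0)"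
  proof -
    have "(\<Sum>i\<in>UNIV. if i \<noteq> j then W i j * d i else 0)^2 =
        (\<Sum>i\<in>UNIV. \<Sum>k\<in>UNIV. (if i \<noteq> j \<and> k \<noteq> j then W i j * W k j * (d i * d k) else 0))"
      unfolding power2_eq_square sum_product by (intro sum.cong refl) auto
    moreover have "(\<Sum>i\<in>UNIV. \<Sum>k\<in>UNIV. (if i = k \<and> i \<noteq> j then W i j * (d i)^2 else 0))
        = (\<Sum>i\<in>UNIV. if i \<noteq> j then W i j * (d i)^2 else 0)"
      by (intro sum.cong refl) (auto simp: if_distrib sum.delta)
    ultimately show ?thesis by (simp add: sum.distrib)
  qed
  finally show ?thesis .
qed


lemma antisym_zero:
  fixes W g :: "'i::finite \<Rightarrow> 'i \<Rightarrow> real"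
  assumes "\<And>i j. W i j = W j i" "\<And>i j. g i j = - g j i"
  shows "(\<Sum>j\<in>UNIV. \<Sum>i\<in>UNIV. if i \<noteq> j then W i j * g i j else 0) = 0"
proof -
  let ?S = "(\<Sum>j\<in>UNIV. \<Sum>i\<in>UNIV. if i \<noteq> j then W i j * g i j else 0)"
  have "?S = (\<Sum>i\<in>UNIV. \<Sum>j\<in>UNIV. if i \<noteq> j then W i j * g i j else 0)"
    by (rule sum.swap)
  also have "\<dots> = (\<Sum>i\<in>UNIV. \<Sum>j\<in>UNIV. - (if j \<noteq> i then W j i * g j i else 0))"
  proof (intro sum.cong refl)
    fix i j show "(if i \<noteq> j then W i j * g i j else 0) = - (if j \<noteq> i then W j i * g j i else 0)"
      using assms(1)[of i j] assms(2)[of i j] by auto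
  qed
  also have "\<dots> = - ?S" by (simp add: sum_negf)
  finally show ?thesis by simp
qed

lemma wcs:
  fixes w d :: "'a \<Rightarrow> real"
  assumes "\<And>i. 0 \<le> w i"
  shows "(\<Sum>i\<in>A. w i * d i)^2 \<le> (\<Sum>i\<in>A. w i) * (\<Sum>i\<in>A. w i * (d i)^2)"
proof -
  have "0 \<le> (\<Sum>i\<in>A. \<Sum>k\<in>A. w i * w k * (d i - d k)^2)"
    by (intro sum_nonneg) (simp add: assms)
  also have "(\<Sum>i\<in>A. \<Sum>k\<in>A. w i * w k * (d i - d k)^2) =
      (\<Sum>i\<in>A. \<Sum>k\<in>A. w i * (w k * (d k)^2)) + (\<Sum>i\<in>A. \<Sum>k\<in>A. w k * (w i * (d i)^2))
      - 2 * (\<Sum>i\<in>A. \<Sum>k\<in>A. (w i * d i) * (w k * d k))"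
    by (simp add: power2_eq_square algebra_simps sum.distrib sum_subtractf sum_distrib_left)
  also have "\<dots> = 2 * ((\<Sum>i\<in>A. w i) * (\<Sum>i\<in>A. w i * (d i)^2) - (\<Sum>i\<in>A. w i * d i)^2)"
    by (simp add: power2_eq_square sum_product algebra_simps) (subst sum.swap, simp add: ac_simps)
  finally show ?thesis by simp
qed


lemma core:
  fixes W :: "'i::finite \<Rightarrow> 'i \<Rightarrow> real" and q :: real and v :: "'i \<Rightarrow> real"
  assumes q: "0 < q" "q < 1"
    and Wb: "\<And>i j. 0 \<le> W i j \<and> W i j \<le> 1"
    and Ws: "\<And>i j. W i j = W j i"
  defines "Wmax \<equiv> Max (range (\<lambda>i. \<Sum>j\<in>UNIV. W i j))"
  defines "\<gamma> \<equiv> (Wmax + 1) * (q / (1 - q))"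
  shows "measure_pmf.expectation (outcome_pmf W)
           (\<lambda>\<omega>. (\<Sum>i\<in>UNIV. if i \<noteq> fst \<omega> \<and> snd \<omega> i then q * (v i - v (fst \<omega>)) else 0)^2)
       \<le> \<gamma> * measure_pmf.expectation (outcome_pmf W)
           (\<lambda>\<omega>. \<Sum>i\<in>UNIV. 2 * v i * (if i \<noteq> fst \<omega> \<and> snd \<omega> i then q * (v i - v (fst \<omega>)) else 0)
                 - (if i \<noteq> fst \<omega> \<and> snd \<omega> i then q * (v i - v (fst \<omega>)) else 0)^2)"
proof -
  define N where "N = real CARD('i)"
  have N: "N > 0" by (simp add: N_def)
  define S where "S = (\<Sum>j\<in>UNIV. \<Sum>i\<in>UNIV. if i \<noteq> j then W i j * (v i - v j)^2 else 0)"
  have Wrow: "(\<Sum>i\<in>UNIV. if i \<noteq> j then W i j else 0) \<le> Wmax" for j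
  proof -
    have "(\<Sum>i\<in>UNIV. if i \<noteq> j then W i j else 0) \<le> (\<Sum>i\<in>UNIV. W j i)"
      by (intro sum_mono) (use Wb Ws in auto)
    also have "\<dots> \<le> Wmax" unfolding Wmax_def by (rule Max_ge) auto
    finally show ?thesis .
  qed
  have Wmax0: "0 \<le> Wmax"
  proof -
    obtain j :: 'i where True by simp
    have "0 \<le> (\<Sum>i\<in>UNIV. if i \<noteq> j then W i j else 0)" by (intro sum_nonneg) (use Wb in auto)
    thus ?thesis using Wrow[of j] by linarith
  qed
  have LHS: "measure_pmf.expectation (outcome_pmf W)
           (\<lambda>\<omega>. (\<Sum>i\<in>UNIV. if i \<noteq> fst \<omega> \<and> snd \<omega> i then q * (v i - v (fst \<omega>)) else 0)^2)
     \<le> (Wmax + 1) * q^2 * S / N"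
  proof -
    have "measure_pmf.expectation (outcome_pmf W)
           (\<lambda>\<omega>. (\<Sum>i\<in>UNIV. if i \<noteq> fst \<omega> \<and> snd \<omega> i then q * (v i - v (fst \<omega>)) else 0)^2)
       = (\<Sum>j\<in>UNIV. measure_pmf.expectation (Pj W j) (\<lambda>r. (\<Sum>i\<in>UNIV. if i \<noteq> j \<and> r i then q * (v i - v j) else 0)^2)) / N"
      by (simp only: E_outcome N_def fst_conv snd_conv)
    also have "\<dots> \<le> (\<Sum>j\<in>UNIV. (Wmax + 1) * (\<Sum>i\<in>UNIV. if i \<noteq> j then W i j * (q * (v i - v j))^2 else 0)) / N"
    proof (intro divide_right_mono sum_mono)
      fix j :: 'i
      let ?d = "\<lambda>i. q * (v i - v j)"
      let ?w = "\<lambda>i. if i \<noteq> j then W i j else 0"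
      have e1: "(\<Sum>i\<in>UNIV. if i \<noteq> j then W i j * ?d i else 0) = (\<Sum>i\<in>UNIV. ?w i * ?d i)"
        by (intro sum.cong) auto
      have e2: "(\<Sum>i\<in>UNIV. if i \<noteq> j then W i j * (?d i)^2 else 0) = (\<Sum>i\<in>UNIV. ?w i * (?d i)^2)"
        by (intro sum.cong) auto
      have nn: "0 \<le> (\<Sum>i\<in>UNIV. ?w i * (?d i)^2)" by (intro sum_nonneg) (use Wb in auto)
      have "(\<Sum>i\<in>UNIV. ?w i * ?d i)^2 \<le> (\<Sum>i\<in>UNIV. ?w i) * (\<Sum>i\<in>UNIV. ?w i * (?d i)^2)"
        by (rule wcs) (use Wb in auto)
      also have "\<dots> \<le> Wmax * (\<Sum>i\<in>UNIV. ?w i * (?d i)^2)"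
        by (rule mult_right_mono[OF Wrow nn])
      finally have cs: "(\<Sum>i\<in>UNIV. ?w i * ?d i)^2 \<le> Wmax * (\<Sum>i\<in>UNIV. ?w i * (?d i)^2)" .
      show "measure_pmf.expectation (Pj W j) (\<lambda>r. (\<Sum>i\<in>UNIV. if i \<noteq> j \<and> r i then ?d i else 0)^2)
         \<le> (Wmax + 1) * (\<Sum>i\<in>UNIV. if i \<noteq> j then W i j * (?d i)^2 else 0)"
        using E2P[of W j ?d] Wb cs unfolding e1 e2 by (simp add: algebra_simps)
    qed (use N in auto)
    also have "\<dots> = (Wmax + 1) * q^2 * S / N"
    proof -
      have "(\<Sum>j\<in>UNIV. (Wmax + 1) * (\<Sum>i\<in>UNIV. if i \<noteq> j then W i j * (q * (v i - v j))^2 else 0))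
          = (Wmax + 1) * q^2 * S"
        unfolding S_def sum_distrib_left by (intro sum.cong refl) (auto simp: power_mult_distrib)
      thus ?thesis by simp
    qed
    finally show ?thesis .
  qed
  have RHS: "measure_pmf.expectation (outcome_pmf W)
           (\<lambda>\<omega>. \<Sum>i\<in>UNIV. 2 * v i * (if i \<noteq> fst \<omega> \<and> snd \<omega> i then q * (v i - v (fst \<omega>)) else 0)
                 - (if i \<noteq> fst \<omega> \<and> snd \<omega> i then q * (v i - v (fst \<omega>)) else 0)^2)
      = q * (1 - q) * S / N"
  proof -
    have "measure_pmf.expectation (outcome_pmf W)
           (\<lambda>\<omega>. \<Sum>i\<in>UNIV. 2 * v i * (if i \<noteq> fst \<omega> \<and> snd \<omega> i then q * (v i - v (fst \<omega>)) else 0)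
                 - (if i \<noteq> fst \<omega> \<and> snd \<omega> i then q * (v i - v (fst \<omega>)) else 0)^2)
      = (\<Sum>j\<in>UNIV. measure_pmf.expectation (Pj W j) (\<lambda>r. \<Sum>i\<in>UNIV.
           if i \<noteq> j \<and> r i then 2 * v i * (q * (v i - v j)) - (q * (v i - v j))^2 else 0)) / N"
    proof -
      have fe: "(\<lambda>r. \<Sum>i\<in>UNIV. 2 * v i * (if i \<noteq> j \<and> r i then q * (v i - v j) else 0)
                 - (if i \<noteq> j \<and> r i then q * (v i - v j) else 0)^2) = (\<lambda>r. \<Sum>i\<in>UNIV.
           if i \<noteq> j \<and> r i then 2 * v i * (q * (v i - v j)) - (q * (v i - v j))^2 else 0)" for j
        by (intro ext sum.cong refl) auto
      show ?thesis by (simp only: E_outcome N_def fst_conv snd_conv fe)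
    qed
    also have "\<dots> = (\<Sum>j\<in>UNIV. \<Sum>i\<in>UNIV. if i \<noteq> j then W i j * (2 * v i * (q * (v i - v j)) - (q * (v i - v j))^2) else 0) / N"
      by (intro arg_cong[where f="\<lambda>x. x / N"] sum.cong refl E1P Wb)
    also have "(\<Sum>j\<in>UNIV. \<Sum>i\<in>UNIV. if i \<noteq> j then W i j * (2 * v i * (q * (v i - v j)) - (q * (v i - v j))^2) else 0)
       = (\<Sum>j\<in>UNIV. \<Sum>i\<in>UNIV. (if i \<noteq> j then W i j * (q * (1 - q) * (v i - v j)^2) else 0)
            + (if i \<noteq> j then W i j * (q * ((v i)^2 - (v j)^2)) else 0))"
      by (intro sum.cong refl) (auto simp: power2_eq_square algebra_simps)
    also have "\<dots> = q * (1 - q) * S + (\<Sum>j\<in>UNIV. \<Sum>i\<in>UNIV. if i \<noteq> j then W i j * (q * ((v i)^2 - (v j)^2)) else 0)"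
    proof -
      have "(\<Sum>j\<in>UNIV. \<Sum>i\<in>UNIV. (if i \<noteq> j then W i j * (q * (1 - q) * (v i - v j)^2) else 0)) = q * (1 - q) * S"
        unfolding S_def sum_distrib_left by (intro sum.cong refl) auto
      thus ?thesis by (simp add: sum.distrib)
    qed
    also have "(\<Sum>j\<in>UNIV. \<Sum>i\<in>UNIV. if i \<noteq> j then W i j * (q * ((v i)^2 - (v j)^2)) else 0) = 0"
      by (rule antisym_zero[OF Ws]) (simp add: algebra_simps)
    finally show ?thesis by simp
  qed
  have "\<gamma> * (q * (1 - q) * S / N) = (Wmax + 1) * q^2 * S / N"
  proof -
    have "1 - q \<noteq> 0" using q by simp
    then have "\<gamma> * (q * (1 - q)) = (Wmax + 1) * q^2" unfolding \<gamma>_def by (simp add: field_simps power2_eq_square)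
    thus ?thesis by (metis times_divide_eq_right mult.assoc)
  qed
  note g = this
  show ?thesis unfolding RHS g by (rule LHS)
qed


lemma Lv:
  fixes \<omega> :: "'i::finite outcome"
  shows "(\<Sum>k\<in>UNIV. pbga_L q \<omega> i k * v k) = (if i \<noteq> fst \<omega> \<and> snd \<omega> i then q * (v i - v (fst \<omega>)) else 0)"
proof -
  obtain j r where w: "\<omega> = (j, r)" by (cases \<omega>)
  have diag: "(\<Sum>l\<in>UNIV-{i}. pbga_weight q (j,r) i l) = (if i \<noteq> j \<and> r i then q else 0)"
  proof -
    have "(\<Sum>l\<in>UNIV-{i}. pbga_weight q (j,r) i l) = (\<Sum>l\<in>UNIV-{i}. if l = j then (if i \<noteq> j \<and> r i then q else 0) else 0)"
      by (intro sum.cong refl) (auto simp: pbga_weight_def)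
    also have "\<dots> = (if i \<noteq> j \<and> r i then q else 0)" by (subst sum.delta) auto
    finally show ?thesis .
  qed
  have "(\<Sum>k\<in>UNIV. pbga_L q (j,r) i k * v k) = pbga_L q (j,r) i i * v i + (\<Sum>k\<in>UNIV-{i}. pbga_L q (j,r) i k * v k)"
    by (subst sum.remove[of UNIV i]) auto
  also have "(\<Sum>k\<in>UNIV-{i}. pbga_L q (j,r) i k * v k) = (\<Sum>k\<in>UNIV-{i}. if k = j then (if i \<noteq> j \<and> r i then - q * v j else 0) else 0)"
    by (intro sum.cong refl) (auto simp: pbga_L_def laplacian_def pbga_weight_def)
  also have "\<dots> = (if i \<noteq> j \<and> r i then - q * v j else 0)" by (subst sum.delta) auto
  also have "pbga_L q (j,r) i i = (if i \<noteq> j \<and> r i then q else 0)"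
    using diag by (simp add: pbga_L_def laplacian_def)
  finally show ?thesis using w by (auto simp: algebra_simps)
qed

lemma step_eq: "pbga_step q \<omega> x i = x i - (\<Sum>k\<in>UNIV. pbga_L q \<omega> i k * x k)"
  by (subst Lv) (auto simp: pbga_step_def algebra_simps)


lemma Emean:
  fixes W :: "'i::finite \<Rightarrow> 'i \<Rightarrow> real" and q :: real
  assumes Wb: "\<And>i j. 0 \<le> W i j \<and> W i j \<le> 1" and Ws: "\<And>i j. W i j = W j i"
  shows "measure_pmf.expectation (outcome_pmf W)
     (\<lambda>\<omega>. \<Sum>i\<in>UNIV. if i \<noteq> fst \<omega> \<and> snd \<omega> i then q * (v i - v (fst \<omega>)) else 0) = 0"
proof -
  have "measure_pmf.expectation (outcome_pmf W)
     (\<lambda>\<omega>. \<Sum>i\<in>UNIV. if i \<noteq> fst \<omega> \<and> snd \<omega> i then q * (v i - v (fst \<omega>)) else 0)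
    = (\<Sum>j\<in>UNIV. measure_pmf.expectation (Pj W j) (\<lambda>r. \<Sum>i\<in>UNIV. if i \<noteq> j \<and> r i then q * (v i - v j) else 0)) / real CARD('i)"
    by (simp only: E_outcome fst_conv snd_conv)
  also have "\<dots> = (\<Sum>j\<in>UNIV. \<Sum>i\<in>UNIV. if i \<noteq> j then W i j * (q * (v i - v j)) else 0) / real CARD('i)"
    by (intro arg_cong[where f="\<lambda>x. x / real CARD('i)"] sum.cong refl E1P Wb)
  also have "(\<Sum>j\<in>UNIV. \<Sum>i\<in>UNIV. if i \<noteq> j then W i j * (q * (v i - v j)) else 0) = 0"
    by (rule antisym_zero[OF Ws]) (simp add: algebra_simps)
  finally show ?thesis by simp
qed

lemma part1:
  fixes W :: "'i::finite \<Rightarrow> 'i \<Rightarrow> real"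
  assumes Wb: "\<And>i j. 0 \<le> W i j \<and> W i j \<le> 1" and Ws: "\<And>i j. W i j = W j i"
  shows "(\<Sum>i\<in>UNIV. mexp (outcome_pmf W) (pbga_L q) i k) = 0"
proof -
  define e where "e m = (if m = k then 1 else (0::real))" for m
  have pt: "(\<Sum>i\<in>UNIV. pbga_L q \<omega> i k) = (\<Sum>i\<in>UNIV. if i \<noteq> fst \<omega> \<and> snd \<omega> i then q * (e i - e (fst \<omega>)) else 0)" for \<omega>
  proof (intro sum.cong refl)
    fix i
    have "(\<Sum>m\<in>UNIV. pbga_L q \<omega> i m * e m) = pbga_L q \<omega> i k"
      unfolding e_def by (simp add: if_distrib cong: if_cong)
    thus "pbga_L q \<omega> i k = (if i \<noteq> fst \<omega> \<and> snd \<omega> i then q * (e i - e (fst \<omega>)) else 0)"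
      using Lv[of q \<omega> i e] by simp
  qed
  have "(\<Sum>i\<in>UNIV. mexp (outcome_pmf W) (pbga_L q) i k) =
      measure_pmf.expectation (outcome_pmf W) (\<lambda>\<omega>. \<Sum>i\<in>UNIV. pbga_L q \<omega> i k)"
    unfolding mexp_def by (rule Bochner_Integration.integral_sum[symmetric]) simp
  also have "\<dots> = 0" unfolding pt by (rule Emean[OF Wb Ws])
  finally show ?thesis .
qed

lemma quad1:
  fixes L :: "'i::finite \<Rightarrow> 'i \<Rightarrow> real"
  shows "(\<Sum>i\<in>UNIV. \<Sum>k\<in>UNIV. v i * mmult (mmult (mtrans L) ones_mat) L i k * v k)
     = (\<Sum>l\<in>UNIV. \<Sum>k\<in>UNIV. L l k * v k)^2"
proof -
  have "(\<Sum>i\<in>UNIV. \<Sum>k\<in>UNIV. v i * mmult (mmult (mtrans L) ones_mat) L i k * v k)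
     = (\<Sum>i\<in>UNIV. \<Sum>k\<in>UNIV. (v i * (\<Sum>m\<in>UNIV. L m i)) * (\<Sum>l\<in>UNIV. L l k * v k))"
    unfolding mmult_def mtrans_def ones_mat_def
    by (simp add: sum_distrib_left[symmetric] sum_distrib_right[symmetric] mult_ac)
  also have "\<dots> = (\<Sum>i\<in>UNIV. v i * (\<Sum>m\<in>UNIV. L m i)) * (\<Sum>k\<in>UNIV. \<Sum>l\<in>UNIV. L l k * v k)"
    by (simp add: sum_product)
  also have "(\<Sum>i\<in>UNIV. v i * (\<Sum>m\<in>UNIV. L m i)) = (\<Sum>l\<in>UNIV. \<Sum>k\<in>UNIV. L l k * v k)"
    by (simp add: sum_distrib_left mult_ac) (rule sum.swap)
  also have "(\<Sum>k\<in>UNIV. \<Sum>l\<in>UNIV. L l k * v k) = (\<Sum>l\<in>UNIV. \<Sum>k\<in>UNIV. L l k * v k)"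
    by (rule sum.swap)
  finally show ?thesis by (simp add: power2_eq_square)
qed


lemma quad2:
  fixes L :: "'i::finite \<Rightarrow> 'i \<Rightarrow> real"
  shows "(\<Sum>i\<in>UNIV. \<Sum>k\<in>UNIV. v i * (L i k + mtrans L i k - mmult (mtrans L) L i k) * v k)
     = (\<Sum>l\<in>UNIV. 2 * v l * (\<Sum>k\<in>UNIV. L l k * v k) - (\<Sum>k\<in>UNIV. L l k * v k)^2)"
proof -
  have T1: "(\<Sum>i\<in>UNIV. \<Sum>k\<in>UNIV. v i * L i k * v k) = (\<Sum>l\<in>UNIV. v l * (\<Sum>k\<in>UNIV. L l k * v k))"
    by (simp add: sum_distrib_left mult_ac)
  have T2: "(\<Sum>i\<in>UNIV. \<Sum>k\<in>UNIV. v i * L k i * v k) = (\<Sum>l\<in>UNIV. v l * (\<Sum>k\<in>UNIV. L l k * v k))"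
    by (subst sum.swap) (simp add: sum_distrib_left mult_ac)
  have T3: "(\<Sum>i\<in>UNIV. \<Sum>k\<in>UNIV. v i * mmult (mtrans L) L i k * v k) = (\<Sum>l\<in>UNIV. (\<Sum>k\<in>UNIV. L l k * v k)^2)"
  proof -
    have "(\<Sum>i\<in>UNIV. \<Sum>k\<in>UNIV. v i * mmult (mtrans L) L i k * v k)
       = (\<Sum>i\<in>UNIV. \<Sum>k\<in>UNIV. \<Sum>l\<in>UNIV. (L l i * v i) * (L l k * v k))"
      unfolding mmult_def mtrans_def by (simp add: sum_distrib_left sum_distrib_right mult_ac)
    also have "\<dots> = (\<Sum>i\<in>UNIV. \<Sum>l\<in>UNIV. \<Sum>k\<in>UNIV. (L l i * v i) * (L l k * v k))"
      by (rule sum.cong[OF refl], rule sum.swap)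
    also have "\<dots> = (\<Sum>l\<in>UNIV. \<Sum>i\<in>UNIV. \<Sum>k\<in>UNIV. (L l i * v i) * (L l k * v k))"
      by (rule sum.swap)
    also have "\<dots> = (\<Sum>l\<in>UNIV. (\<Sum>k\<in>UNIV. L l k * v k)^2)"
      by (simp add: power2_eq_square sum_product)
    finally show ?thesis .
  qed
  have "(\<Sum>i\<in>UNIV. \<Sum>k\<in>UNIV. v i * (L i k + mtrans L i k - mmult (mtrans L) L i k) * v k)
     = (\<Sum>i\<in>UNIV. \<Sum>k\<in>UNIV. v i * L i k * v k) + (\<Sum>i\<in>UNIV. \<Sum>k\<in>UNIV. v i * L k i * v k)
       - (\<Sum>i\<in>UNIV. \<Sum>k\<in>UNIV. v i * mmult (mtrans L) L i k * v k)"
    unfolding mtrans_def by (simp add: algebra_simps sum.distrib sum_subtractf)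
  also have "\<dots> = (\<Sum>l\<in>UNIV. 2 * v l * (\<Sum>k\<in>UNIV. L l k * v k) - (\<Sum>k\<in>UNIV. L l k * v k)^2)"
    unfolding T1 T2 T3 by (simp add: sum_subtractf sum.distrib[symmetric] algebra_simps)
  finally show ?thesis .
qed


lemma linq:
  fixes p :: "'w::finite pmf" and M :: "'w \<Rightarrow> 'i::finite \<Rightarrow> 'i \<Rightarrow> real"
  shows "(\<Sum>i\<in>UNIV. \<Sum>k\<in>UNIV. v i * mexp p M i k * v k)
     = measure_pmf.expectation p (\<lambda>\<omega>. \<Sum>i\<in>UNIV. \<Sum>k\<in>UNIV. v i * M \<omega> i k * v k)"
  by (simp add: Bochner_Integration.integral_sum mexp_def)

lemma part2:
  fixes W :: "'i::finite \<Rightarrow> 'i \<Rightarrow> real" and q :: real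
  assumes q: "0 < q" "q < 1"
    and Wb: "\<And>i j. 0 \<le> W i j \<and> W i j \<le> 1"
    and Ws: "\<And>i j. W i j = W j i"
  defines "Wmax \<equiv> Max (range (\<lambda>i. \<Sum>j\<in>UNIV. W i j))"
  defines "\<gamma> \<equiv> (Wmax + 1) * (q / (1 - q))"
  defines "EL \<equiv> \<lambda>M. mexp (outcome_pmf W) M"
  shows "mat_le (EL (\<lambda>\<omega>. mmult (mmult (mtrans (pbga_L q \<omega>)) ones_mat) (pbga_L q \<omega>)))
             (\<lambda>i k. \<gamma> * EL (\<lambda>\<omega> i k. pbga_L q \<omega> i k + mtrans (pbga_L q \<omega>) i k
                         - mmult (mtrans (pbga_L q \<omega>)) (pbga_L q \<omega>) i k) i k)"
  unfolding mat_le_def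
proof
  fix v :: "'i \<Rightarrow> real"
  let ?E = "measure_pmf.expectation (outcome_pmf W)"
  let ?M1 = "\<lambda>\<omega>. mmult (mmult (mtrans (pbga_L q \<omega>)) ones_mat) (pbga_L q \<omega>)"
  let ?M2 = "\<lambda>\<omega> i k. pbga_L q \<omega> i k + mtrans (pbga_L q \<omega>) i k - mmult (mtrans (pbga_L q \<omega>)) (pbga_L q \<omega>) i k"
  let ?d = "\<lambda>\<omega> i. if i \<noteq> fst \<omega> \<and> snd \<omega> i then q * (v i - v (fst \<omega>)) else 0"
  have "(\<Sum>i\<in>UNIV. \<Sum>k\<in>UNIV. v i * (EL ?M1 i k - \<gamma> * EL ?M2 i k) * v k)
     = (\<Sum>i\<in>UNIV. \<Sum>k\<in>UNIV. v i * EL ?M1 i k * v k) - \<gamma> * (\<Sum>i\<in>UNIV. \<Sum>k\<in>UNIV. v i * EL ?M2 i k * v k)"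
    by (simp add: algebra_simps sum_subtractf sum_distrib_left)
  also have "(\<Sum>i\<in>UNIV. \<Sum>k\<in>UNIV. v i * EL ?M1 i k * v k) = ?E (\<lambda>\<omega>. (\<Sum>i\<in>UNIV. ?d \<omega> i)^2)"
    unfolding EL_def linq quad1 Lv ..
  also have "(\<Sum>i\<in>UNIV. \<Sum>k\<in>UNIV. v i * EL ?M2 i k * v k) = ?E (\<lambda>\<omega>. \<Sum>i\<in>UNIV. 2 * v i * ?d \<omega> i - (?d \<omega> i)^2)"
    unfolding EL_def linq quad2 Lv ..
  finally have eq: "(\<Sum>i\<in>UNIV. \<Sum>k\<in>UNIV. v i * (EL ?M1 i k - \<gamma> * EL ?M2 i k) * v k)
     = ?E (\<lambda>\<omega>. (\<Sum>i\<in>UNIV. ?d \<omega> i)^2) - \<gamma> * ?E (\<lambda>\<omega>. \<Sum>i\<in>UNIV. 2 * v i * ?d \<omega> i - (?d \<omega> i)^2)" .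
  have "?E (\<lambda>\<omega>. (\<Sum>i\<in>UNIV. ?d \<omega> i)^2) \<le> \<gamma> * ?E (\<lambda>\<omega>. \<Sum>i\<in>UNIV. 2 * v i * ?d \<omega> i - (?d \<omega> i)^2)"
    unfolding \<gamma>_def Wmax_def by (rule core[OF q Wb Ws])
  thus "(\<Sum>i\<in>UNIV. \<Sum>k\<in>UNIV. v i * (EL ?M1 i k - \<gamma> * EL ?M2 i k) * v k) \<le> 0"
    unfolding eq by simp
qed


lemma lyap:
  fixes W :: "'i::finite \<Rightarrow> 'i \<Rightarrow> real" and q :: real and a :: real and x :: "'i \<Rightarrow> real"
  assumes q: "0 < q" "q < 1"
    and Wb: "\<And>i j. 0 \<le> W i j \<and> W i j \<le> 1"
    and Ws: "\<And>i j. W i j = W j i"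
  defines "Wmax \<equiv> Max (range (\<lambda>i. \<Sum>j\<in>UNIV. W i j))"
  defines "\<gamma> \<equiv> (Wmax + 1) * (q / (1 - q))"
  defines "\<Phi> \<equiv> \<lambda>x::'i \<Rightarrow> real. (\<Sum>i\<in>UNIV. x i - a)^2 + \<gamma> * (\<Sum>i\<in>UNIV. (x i - a)^2)"
  shows "measure_pmf.expectation (outcome_pmf W) (\<lambda>\<omega>. \<Phi> (pbga_step q \<omega> x)) \<le> \<Phi> x"
proof -
  let ?E = "measure_pmf.expectation (outcome_pmf W)"
  define y where "y i = x i - a" for i
  define d where "d \<omega> i = (if i \<noteq> fst \<omega> \<and> snd \<omega> i then q * (y i - y (fst \<omega>)) else 0)" for \<omega> :: "'i outcome" and i
  define D where "D \<omega> = (\<Sum>i\<in>UNIV. d \<omega> i)" for \<omega>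
  define Q where "Q \<omega> = (\<Sum>i\<in>UNIV. 2 * y i * d \<omega> i - (d \<omega> i)^2)" for \<omega>
  define s where "s = (\<Sum>i\<in>UNIV. y i)"
  define s2 where "s2 = (\<Sum>i\<in>UNIV. (y i)^2)"
  have st: "pbga_step q \<omega> x i - a = y i - d \<omega> i" for \<omega> i
    unfolding pbga_step_def d_def y_def by (auto simp: algebra_simps)
  have pw: "\<Phi> (pbga_step q \<omega> x) = (s^2 + \<gamma> * s2) - 2 * s * D \<omega> + ((D \<omega>)^2 - \<gamma> * Q \<omega>)" for \<omega>
  proof -
    have a1: "(\<Sum>i\<in>UNIV. pbga_step q \<omega> x i - a) = s - D \<omega>"
      unfolding st s_def D_def by (simp add: sum_subtractf)
    have a2: "(\<Sum>i\<in>UNIV. (pbga_step q \<omega> x i - a)^2) = s2 - Q \<omega>"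
      unfolding st s2_def Q_def by (simp add: sum_subtractf[symmetric] power2_eq_square algebra_simps)
    show ?thesis unfolding \<Phi>_def a1 a2 by (simp add: power2_eq_square algebra_simps)
  qed
  have "?E (\<lambda>\<omega>. \<Phi> (pbga_step q \<omega> x)) = (s^2 + \<gamma> * s2) - 2 * s * ?E D + (?E (\<lambda>\<omega>. (D \<omega>)^2) - \<gamma> * ?E Q)"
    unfolding pw by simp
  also have "?E D = 0" unfolding D_def d_def by (rule Emean[OF Wb Ws])
  also have "?E (\<lambda>\<omega>. (D \<omega>)^2) \<le> \<gamma> * ?E Q"
    unfolding D_def Q_def d_def \<gamma>_def Wmax_def by (rule core[OF q Wb Ws])
  also have "s^2 + \<gamma> * s2 = \<Phi> x" unfolding \<Phi>_def s_def s2_def y_def ..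
  finally show ?thesis by simp
qed


lemma fin_state: "finite (set_pmf (pbga_state W q x0 t))"
  by (induction t) auto

lemma part3:
  fixes W :: "'i::finite \<Rightarrow> 'i \<Rightarrow> real" and q :: real and x0 :: "'i \<Rightarrow> real"
  assumes q: "0 < q" "q < 1"
    and Wb: "\<And>i j. 0 \<le> W i j \<and> W i j \<le> 1"
    and Ws: "\<And>i j. W i j = W j i"
  defines "Wmax \<equiv> Max (range (\<lambda>i. \<Sum>j\<in>UNIV. W i j))"
  defines "\<gamma> \<equiv> (Wmax + 1) * (q / (1 - q))"
  shows "measure_pmf.expectation (pbga_state W q x0 t) (\<lambda>x. (avg x - avg x0)^2)
            \<le> \<gamma> / (real CARD('i) + \<gamma>) * Var x0"
proof -
  define a where "a = avg x0"
  define N where "N = real CARD('i)"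
  have N: "N > 0" by (simp add: N_def)
  define \<Phi> where "\<Phi> = (\<lambda>x::'i \<Rightarrow> real. (\<Sum>i\<in>UNIV. x i - a)^2 + \<gamma> * (\<Sum>i\<in>UNIV. (x i - a)^2))"
  have Wmax0: "0 \<le> Wmax"
  proof -
    obtain j :: 'i where True by simp
    have "0 \<le> (\<Sum>i\<in>UNIV. W j i)" by (intro sum_nonneg) (use Wb in auto)
    also have "\<dots> \<le> Wmax" unfolding Wmax_def by (rule Max_ge) auto
    finally show ?thesis .
  qed
  have g0: "0 \<le> \<gamma>" unfolding \<gamma>_def using q Wmax0 by simp
  have ind: "measure_pmf.expectation (pbga_state W q x0 t) \<Phi> \<le> \<Phi> x0" for t
  proof (induction t)
    case 0
    then show ?case by simp
  next
    case (Suc t)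
    let ?p = "pbga_state W q x0 t"
    have "measure_pmf.expectation (pbga_state W q x0 (Suc t)) \<Phi>
        = (\<Sum>y\<in>set_pmf ?p. pmf ?p y *\<^sub>R measure_pmf.expectation (map_pmf (\<lambda>\<omega>. pbga_step q \<omega> y) (outcome_pmf W)) \<Phi>)"
      by (simp only: pbga_state.simps, rule pmf_expectation_bind) (auto simp: fin_state)
    also have "\<dots> \<le> (\<Sum>y\<in>set_pmf ?p. pmf ?p y *\<^sub>R \<Phi> y)"
    proof (intro sum_mono)
      fix y
      have "measure_pmf.expectation (outcome_pmf W) (\<lambda>\<omega>. \<Phi> (pbga_step q \<omega> y)) \<le> \<Phi> y"
        unfolding \<Phi>_def \<gamma>_def Wmax_def by (rule lyap[OF q Wb Ws])
      thus "pmf ?p y *\<^sub>R measure_pmf.expectation (map_pmf (\<lambda>\<omega>. pbga_step q \<omega> y) (outcome_pmf W)) \<Phi>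
          \<le> pmf ?p y *\<^sub>R \<Phi> y"
        by (simp add: mult_left_mono)
    qed
    also have "\<dots> = measure_pmf.expectation ?p \<Phi>"
      by (rule integral_measure_pmf[symmetric]) (auto simp: fin_state)
    finally show ?case using Suc by simp
  qed
  have Phi0: "\<Phi> x0 = \<gamma> * N * Var x0"
  proof -
    have "(\<Sum>i\<in>UNIV. x0 i - a) = 0"
      unfolding a_def avg_def by (simp add: sum_subtractf)
    thus ?thesis unfolding \<Phi>_def Var_def N_def a_def by simp
  qed
  have pw: "(N^2 + \<gamma> * N) * (avg x - a)^2 \<le> \<Phi> x" for x :: "'i \<Rightarrow> real"
  proof -
    have s: "(\<Sum>i\<in>UNIV. x i - a) = N * (avg x - a)"
      unfolding avg_def N_def by (simp add: sum_subtractf algebra_simps)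
    have "(\<Sum>i\<in>UNIV. 1 * (x i - a))^2 \<le> (\<Sum>i::'i\<in>UNIV. (1::real)) * (\<Sum>i\<in>UNIV. 1 * (x i - a)^2)"
      using wcs[where w="\<lambda>_. 1" and d="\<lambda>i. x i - a" and A=UNIV] by simp
    hence "(N * (avg x - a))^2 \<le> N * (\<Sum>i\<in>UNIV. (x i - a)^2)"
      using s by (simp add: N_def)
    hence "N * (avg x - a)^2 \<le> (\<Sum>i\<in>UNIV. (x i - a)^2)"
      using N by (simp add: power_mult_distrib power2_eq_square mult_ac)
    hence "\<gamma> * (N * (avg x - a)^2) \<le> \<gamma> * (\<Sum>i\<in>UNIV. (x i - a)^2)"
      using g0 by (rule mult_left_mono)
    moreover have "\<Phi> x = N^2 * (avg x - a)^2 + \<gamma> * (\<Sum>i\<in>UNIV. (x i - a)^2)"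
      unfolding \<Phi>_def s by (simp add: power_mult_distrib)
    moreover have "(N^2 + \<gamma> * N) * (avg x - a)^2 = N^2 * (avg x - a)^2 + \<gamma> * (N * (avg x - a)^2)"
      by (simp add: algebra_simps)
    ultimately show ?thesis by linarith
  qed
  let ?p = "pbga_state W q x0 t"
  have "(N^2 + \<gamma> * N) * measure_pmf.expectation ?p (\<lambda>x. (avg x - a)^2)
      = measure_pmf.expectation ?p (\<lambda>x. (N^2 + \<gamma> * N) * (avg x - a)^2)" by simp
  also have "\<dots> \<le> measure_pmf.expectation ?p \<Phi>"
    by (rule integral_mono) (auto intro: integrable_measure_pmf_finite simp: fin_state pw)
  also have "\<dots> \<le> \<gamma> * N * Var x0" using ind Phi0 by simp
  finally have "(N^2 + \<gamma> * N) * measure_pmf.expectation ?p (\<lambda>x. (avg x - a)^2) \<le> \<gamma> * N * Var x0" .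
  moreover have "N^2 + \<gamma> * N = N * (N + \<gamma>)" by (simp add: power2_eq_square algebra_simps)
  moreover have "N + \<gamma> > 0" using N g0 by simp
  ultimately have "N * ((N + \<gamma>) * measure_pmf.expectation ?p (\<lambda>x. (avg x - a)^2)) \<le> N * (\<gamma> * Var x0)"
    by (simp add: mult_ac)
  hence "(N + \<gamma>) * measure_pmf.expectation ?p (\<lambda>x. (avg x - a)^2) \<le> \<gamma> * Var x0"
    using N by (rule mult_left_le_imp_le)
  hence "measure_pmf.expectation ?p (\<lambda>x. (avg x - a)^2) \<le> \<gamma> * Var x0 / (N + \<gamma>)"
    using \<open>N + \<gamma> > 0\<close> by (simp add: pos_le_divide_eq mult_ac)
  thus ?thesis unfolding a_def N_def by simp
qed

theorem proposition5:
  fixes W :: "'i::finite \<Rightarrow> 'i \<Rightarrow> real" and q :: real and x0 :: "'i \<Rightarrow> real"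
  assumes "0 < q" "q < 1"
    and "\<And>i j. 0 \<le> W i j \<and> W i j \<le> 1"
    and "\<And>i j. W i j = W j i"
  defines "Wmax \<equiv> Max (range (\<lambda>i. \<Sum>j\<in>UNIV. W i j))"
  defines "\<gamma> \<equiv> (Wmax + 1) * (q / (1 - q))"
  defines "EL \<equiv> \<lambda>M. mexp (outcome_pmf W) M"
  shows "(\<forall>k. (\<Sum>i\<in>UNIV. EL (pbga_L q) i k) = 0)
    \<and> mat_le (EL (\<lambda>\<omega>. mmult (mmult (mtrans (pbga_L q \<omega>)) ones_mat) (pbga_L q \<omega>)))
             (\<lambda>i k. \<gamma> * EL (\<lambda>\<omega> i k. pbga_L q \<omega> i k + mtrans (pbga_L q \<omega>) i k
                         - mmult (mtrans (pbga_L q \<omega>)) (pbga_L q \<omega>) i k) i k)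
    \<and> (\<forall>t. measure_pmf.expectation (pbga_state W q x0 t) (\<lambda>x. (avg x - avg x0)^2)
            \<le> \<gamma> / (real CARD('i) + \<gamma>) * Var x0)"
  using part1[where W=W and q=q, OF assms(3,4)] part2[where W=W and q=q, OF assms(1-4)] part3[where W=W and q=q, OF assms(1-4)]
  unfolding EL_def \<gamma>_def Wmax_def by blast

end
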